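(* Let $q>1$ and let $\rho$ be a positive $2\pi$-periodic $C^2$ function with $(\ln\rho)''(t)<\sqrt{q}/(1+\sqrt{q})$ for all $t$; let $y(\theta)=\rho(\theta)(\cos\theta,\sin\theta)^T$, and let $\phi$ be a continuous function on $\mathbb{S}^1$. With the notation in the context, suppose there is a sequence of positive numbers $k_n\to\infty$ such that for every $\eta\in\mathbb{S}^1$ and every integer $N\ge0$, $$\sum_{j,l=1}^2\big(f_\eta^{j,l}\big)^N\frac{\phi(\mathcal{T}_{j,l}\eta+\delta_{l,2}\pi)\,\Psi_\eta^{j,l}}{|\det D^2\psi_\eta^{j,l}|^{1/2}}\,e^{\mathrm{i}\pi\frac{(-1)^l(1-(-1)^j)}{4}+\mathrm{i}k_n\psi_\eta^{j,l}}\longrightarrow0\quad(n\to\infty).$$ Let $\eta\in\mathbb{S}^1$ satisfy $\rho'(\theta_\eta+\pi)=0\neq\rho'(\theta_\eta)$. Then $\phi(\mathcal{T}_{1,1}\eta)=\phi(\mathcal{T}_{2,2}\eta+\pi)=0$. Moreover, $\phi(\theta_\eta)$ and $\phi(\theta_\eta+\pi)$ are either both zero or both nonzero.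
   Context: Identify $\mathbb{S}^1$ with $\mathbb{R}/(2\pi\mathbb{Z})$ via $\theta\mapsto(\cos\theta,\sin\theta)^T$; $\theta_\eta$ is the angle of $\eta$, and $x^\perp=(-x_2,x_1)^T$. For $\eta\in\mathbb{S}^1$ and $\xi=(\cos\theta_\xi,\sin\theta_\xi)$: $\psi_\eta(\theta,\theta_\xi)=(\sqrt{q}\eta+\xi)\cdot y(\theta)$, $\Psi_\eta(\theta,\theta_\xi)=-(\sqrt{q}\eta-\xi)\cdot y'(\theta)^\perp$, and $D^2\psi_\eta(\theta,\theta_\xi)=\begin{bmatrix}(\sqrt{q}\eta+\xi)\cdot y''(\theta)&\xi^\perp\cdot y'(\theta)\\ \xi^\perp\cdot y'(\theta)&-\xi\cdot y(\theta)\end{bmatrix}$. For $l\in\{1,2\}$ let $\eta_l=(-1)^{l-1}\eta$, $\theta_q=\arccos(1/\sqrt q)$, $h(\theta)=\frac{\sqrt q\sin\theta}{\sqrt q\cos\theta+1}$; the equation $(\ln\rho)'(\theta)=h(\theta-\theta_{\eta_l})$ has exactly two solutions in $\mathbb{R}/(2\pi\mathbb{Z})$: $\mathcal{T}_{1,l}\eta$ with $\theta-\theta_{\eta_l}\in(\theta_q-\pi,\pi-\theta_q)$ and $\mathcal{T}_{2,l}\eta$ with $\theta-\theta_{\eta_l}\in(\pi-\theta_q,\pi+\theta_q)$ (mod $2\pi$). Set $\{\Psi_\eta^{j,l},\psi_\eta^{j,l},D^2\psi_\eta^{j,l}\}=\{\Psi_\eta,\psi_\eta,D^2\psi_\eta\}(\mathcal{T}_{j,l}\eta,\mathcal{T}_{j,l}\eta+\delta_{l,2}\pi)$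 (these determinants are nonzero) and $f_\eta^{j,l}=\rho(\mathcal{T}_{j,l}\eta)\sin(\mathcal{T}_{j,l}\eta-\theta_\eta)$; $\delta_{l,2}$ is the Kronecker delta and $\phi$ is viewed as a function of the angle. *)

theory Defs
  imports "HOL-Analysis.Analysis"
begin

text \<open>Planar vectors are represented as pairs of reals; angles are reals
  (the circle is identified with the reals modulo 2 pi).\<close>

definition dot2 :: "real \<times> real \<Rightarrow> real \<times> real \<Rightarrow> real" where
  "dot2 a b = fst a * fst b + snd a * snd b"

definition perp2 :: "real \<times> real \<Rightarrow> real \<times> real" where
  "perp2 a = (- snd a, fst a)"

definition dir :: "real \<Rightarrow> real \<times> real" where
  "dir t = (cos t, sin t)"

definition ycurve :: "(real \<Rightarrow> real) \<Rightarrow> real \<Rightarrow> real \<times> real" where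
  "ycurve \<rho> \<theta> = (\<rho> \<theta> * cos \<theta>, \<rho> \<theta> * sin \<theta>)"

definition ycurve' :: "(real \<Rightarrow> real) \<Rightarrow> real \<Rightarrow> real \<times> real" where
  "ycurve' \<rho> \<theta> = (deriv (\<lambda>s. \<rho> s * cos s) \<theta>, deriv (\<lambda>s. \<rho> s * sin s) \<theta>)"

definition ycurve'' :: "(real \<Rightarrow> real) \<Rightarrow> real \<Rightarrow> real \<times> real" where
  "ycurve'' \<rho> \<theta> = (deriv (deriv (\<lambda>s. \<rho> s * cos s)) \<theta>,
                     deriv (deriv (\<lambda>s. \<rho> s * sin s)) \<theta>)"

text \<open>eta is given by its angle t; xi by its angle txi.\<close>
definition psi_fn :: "real \<Rightarrow> (real \<Rightarrow> real) \<Rightarrow> real \<Rightarrow> real \<Rightarrow> real \<Rightarrow> real" where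
  "psi_fn q \<rho> t \<theta> txi =
     dot2 (sqrt q * cos t + cos txi, sqrt q * sin t + sin txi) (ycurve \<rho> \<theta>)"

definition Psi_fn :: "real \<Rightarrow> (real \<Rightarrow> real) \<Rightarrow> real \<Rightarrow> real \<Rightarrow> real \<Rightarrow> real" where
  "Psi_fn q \<rho> t \<theta> txi =
     - dot2 (sqrt q * cos t - cos txi, sqrt q * sin t - sin txi) (perp2 (ycurve' \<rho> \<theta>))"

definition detD2psi :: "real \<Rightarrow> (real \<Rightarrow> real) \<Rightarrow> real \<Rightarrow> real \<Rightarrow> real \<Rightarrow> real" where
  "detD2psi q \<rho> t \<theta> txi =
     dot2 (sqrt q * cos t + cos txi, sqrt q * sin t + sin txi) (ycurve'' \<rho> \<theta>)
       * (- dot2 (dir txi) (ycurve \<rho> \<theta>))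
     - (dot2 (perp2 (dir txi)) (ycurve' \<rho> \<theta>))\<^sup>2"

definition theta_q :: "real \<Rightarrow> real" where
  "theta_q q = arccos (1 / sqrt q)"

definition hfun :: "real \<Rightarrow> real \<Rightarrow> real" where
  "hfun q \<theta> = sqrt q * sin \<theta> / (sqrt q * cos \<theta> + 1)"

definition in_mod2pi :: "real \<Rightarrow> real \<Rightarrow> real \<Rightarrow> bool" where
  "in_mod2pi x a b \<longleftrightarrow> (\<exists>k::int. x + 2 * pi * of_int k \<in> {a<..<b})"

text \<open>Angle of eta_l = (-1)^(l-1) eta, for l in {1,2}.\<close>
definition eta_angle :: "nat \<Rightarrow> real \<Rightarrow> real" where
  "eta_angle l t = (if l = 2 then t + pi else t)"

text \<open>T_{j,l} eta, as the representative in [0, 2 pi) of the unique solution of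
  (ln rho)'(theta) = h(theta - theta_{eta_l}) in the prescribed range.\<close>
definition Tmap :: "real \<Rightarrow> (real \<Rightarrow> real) \<Rightarrow> nat \<Rightarrow> nat \<Rightarrow> real \<Rightarrow> real" where
  "Tmap q \<rho> j l t = (THE \<theta>. \<theta> \<in> {0..<2*pi}
      \<and> deriv (\<lambda>s. ln (\<rho> s)) \<theta> = hfun q (\<theta> - eta_angle l t)
      \<and> (if j = 1
         then in_mod2pi (\<theta> - eta_angle l t) (theta_q q - pi) (pi - theta_q q)
         else in_mod2pi (\<theta> - eta_angle l t) (pi - theta_q q) (pi + theta_q q)))"

definition summand :: "real \<Rightarrow> (real \<Rightarrow> real) \<Rightarrow> (real \<Rightarrow> complex) \<Rightarrow> real \<Rightarrow> nat
    \<Rightarrow> real \<Rightarrow> nat \<Rightarrow> nat \<Rightarrow> complex" where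
  "summand q \<rho> \<phi> t N kn j l =
     (let T = Tmap q \<rho> j l t;
          txi = T + (if l = 2 then pi else 0);
          f = \<rho> T * sin (T - t)
      in complex_of_real (f ^ N * Psi_fn q \<rho> t T txi
                          / sqrt \<bar>detD2psi q \<rho> t T txi\<bar>)
         * \<phi> txi
         * exp (\<i> * complex_of_real (pi * (-1) ^ l * (1 - (-1) ^ j) / 4
                                     + kn * psi_fn q \<rho> t T txi)))"

end

theory Submission
  imports Defs
begin

lemma per_int:
  fixes f :: "real \<Rightarrow> 'b"
  assumes "\<forall>x. f (x + 2 * pi) = f x"
  shows "f (x + 2 * pi * of_int k) = f x"
proof -
  have pos: "f (y + 2 * pi * of_nat n) = f y" for y n
  proof (induction n)
    case (Suc n)
    have "y + 2 * pi * of_nat (Suc n) = (y + 2 * pi * of_nat n) + 2 * pi" by (simp add: algebra_simps)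
    then show ?case using assms Suc by metis
  qed simp
  show ?thesis
  proof (cases "k \<ge> 0")
    case True
    define n where "n = nat k"
    have kn: "k = int n" using True unfolding n_def by simp
    show ?thesis using pos[of x n] unfolding kn by simp
  next
    case False
    define n where "n = nat (- k)"
    have kn: "k = - int n" using False unfolding n_def by simp
    have e1: "x + 2 * pi * of_int k = x - 2 * pi * of_nat n" unfolding kn by simp
    have e2: "x - 2 * pi * of_nat n + 2 * pi * of_nat n = x" by simp
    show ?thesis using pos[of "x - 2 * pi * of_nat n" n] unfolding e1 e2 by simp
  qed
qed

lemma deriv_per:
  fixes f :: "real \<Rightarrow> real"
  assumes "\<forall>x. f (x + 2 * pi) = f x"
  shows "\<forall>x. deriv f (x + 2 * pi) = deriv f x"
proof
  fix x
  have e: "(\<lambda>x. f (x + 2 * pi)) = f" using assms by (intro ext) blast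
  have "(f has_field_derivative D) (at (x + 2 * pi)) \<longleftrightarrow> (f has_field_derivative D) (at x)" for D
    using DERIV_shift[of f D x "2 * pi"] unfolding e .
  then show "deriv f (x + 2 * pi) = deriv f x"
    unfolding deriv_def by presburger
qed

lemma hfun_per: "\<forall>x. hfun q (x + 2 * pi) = hfun q x"
  unfolding hfun_def by simp


lemma alg1: "(c::real)^2 + s^2 = 1 \<Longrightarrow> Q * c * (Q * c + 1) - Q * s * (- Q * s) = Q * Q + Q * c"
proof -
  assume a: "c^2 + s^2 = 1"
  have "Q * c * (Q * c + 1) - Q * s * (- Q * s) = Q * Q * (c^2 + s^2) + Q * c" by (simp add: algebra_simps power2_eq_square)
  then show ?thesis using a by simp
qed

lemma alg2: "((Q::real) * Q + Q * c) * (1 + Q) - Q * (Q * c + 1)^2 = Q * ((1 - c) * (Q * Q * c + Q * Q + Q - 1))"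
  by (simp add: algebra_simps power2_eq_square)
lemma bound_gen:
  fixes Q c :: real
  assumes Q1: "Q > 1" and c: "-1 \<le> c" "c \<le> 1" and D: "Q * c + 1 \<noteq> 0"
  shows "Q / (1 + Q) \<le> (Q * Q + Q * c) / (Q * c + 1)^2"
proof -
  have pos: "(Q * c + 1)^2 > 0" using D by simp
  have h1: "Q*Q*c \<ge> - (Q*Q)"
  proof -
    have "Q*Q*c \<ge> Q*Q*(-1)" using c Q1 by (intro mult_left_mono) auto
    then show ?thesis by simp
  qed
  have h2: "Q*Q*c + Q*Q + Q - 1 \<ge> 0" using h1 Q1 by linarith
  have h3: "(1 - c) * (Q*Q*c + Q*Q + Q - 1) \<ge> 0" using h2 c by simp
  have h4: "Q * ((1 - c) * (Q*Q*c + Q*Q + Q - 1)) \<ge> 0" using h3 Q1 by simp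
  have "Q * (Q * c + 1)^2 \<le> (Q*Q + Q * c) * (1 + Q)"
    using alg2[of Q c] h4 by linarith
  moreover have "0 < 1 + Q" using Q1 by linarith
  ultimately show ?thesis using pos by (simp add: divide_simps)
qed

lemma lim_top:
  fixes f g L H :: "real \<Rightarrow> real"
  assumes "(f \<longlongrightarrow> c) F" "c > 0" "(g \<longlongrightarrow> 0) F" "eventually (\<lambda>x. g x > 0) F"
    "(L \<longlongrightarrow> l) F" "\<And>x. H x = L x + f x / g x"
  shows "eventually (\<lambda>x. H x > 0) F"
proof -
  have "LIM x F. f x / g x :> at_top" by (rule LIM_at_top_divide) (use assms in auto)
  then have "LIM x F. L x + f x / g x :> at_top" by (rule filterlim_tendsto_add_at_top[OF assms(5)])
  then have "eventually (\<lambda>x. 1 \<le> L x + f x / g x) F" unfolding filterlim_at_top by blast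
  then show ?thesis by eventually_elim (use assms(6) in simp)
qed

lemma det_alg:
  fixes e cT sT c s r r1 r2 Q ct st cx sx :: real
  assumes "e * e = 1" "cT^2 + sT^2 = 1" "c^2 + s^2 = 1" "r1 * (Q * c + 1) = Q * s * r"
    "ct = e * (cT * c + sT * s)" "st = e * (sT * c - cT * s)" "cx = e * cT" "sx = e * sT"
  shows "(((Q * ct + cx) * (r2 * cT - 2 * r1 * sT - r * cT) + (Q * st + sx) * (r2 * sT + 2 * r1 * cT - r * sT))
          * (- (cx * (r * cT) + sx * (r * sT))) - ((- sx) * (r1 * cT - r * sT) + cx * (r1 * sT + r * cT))^2) * (Q * c + 1)
       = r * r * Q * (Q + c) - (Q * c + 1)^2 * (r2 * r - r1 * r1)"
  using assms by algebra

lemma Psi_alg: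
  fixes e cT sT c s r r1 r2 Q ct st cx sx :: real
  assumes "e * e = 1" "cT^2 + sT^2 = 1" "c^2 + s^2 = 1" "r1 * (Q * c + 1) = Q * s * r"
    "ct = e * (cT * c + sT * s)" "st = e * (sT * c - cT * s)" "cx = e * cT" "sx = e * sT"
  shows "(- ((Q * ct - cx) * (- (r1 * sT + r * cT)) + (Q * st - sx) * (r1 * cT - r * sT))) * (Q * c + 1)
       = e * r * (Q * Q - 1)"
  using assms by algebra

lemma frac_cross: "(R::real) > 0 \<Longrightarrow> E > 0 \<Longrightarrow> A / R < B / E \<Longrightarrow> E * A < B * R"
  by (simp add: divide_simps mult.commute)

lemma hsin_alg: "(c::real)^2 + s^2 = 1 \<Longrightarrow> Q * c + 1 \<noteq> 0 \<Longrightarrow> Q * s / (Q * c + 1) * s + c = (Q + c) / (Q * c + 1)"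
proof -
  assume a: "c^2 + s^2 = 1" and d: "Q * c + 1 \<noteq> 0"
  have "Q * s * s + c * (Q * c + 1) = Q * (c^2 + s^2) + c" by (simp add: algebra_simps power2_eq_square)
  then have "Q * s * s + c * (Q * c + 1) = Q + c" using a by simp
  then show ?thesis using d by (simp add: field_simps)
qed

lemma hcmp1: "(A::real) > 1 \<Longrightarrow> S > 0 \<Longrightarrow> S / (A + 1) < (- S) / (- A + 1)"
proof -
  assume a: "A > 1" "S > 0"
  have "S / (A + 1) < S / (A - 1)" using a by (intro divide_strict_left_mono) auto
  moreover have "(- S) / (- A + 1) = S / (A - 1)"
    by (metis minus_diff_eq minus_divide_divide uminus_add_conv_diff)
  ultimately show ?thesis by simp
qed
lemma hcmp2: "(A::real) > 1 \<Longrightarrow> S < 0 \<Longrightarrow> (- S) / (- A + 1) < S / (A + 1)"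
  using hcmp1[of A "- S"]
  by (metis minus_diff_eq minus_divide_divide minus_divide_left minus_less_iff neg_0_less_iff_less uminus_add_conv_diff)

lemma sin_neg: "- pi < x \<Longrightarrow> x < 0 \<Longrightarrow> sin x < 0"
  using sin_gt_zero[of "- x"] by simp

lemma vand:
  fixes S0 S1 S2 w1 w2 w3 w4 :: "nat \<Rightarrow> complex" and a b :: real
  assumes ab: "a \<noteq> 0" "b \<noteq> 0" "a \<noteq> b"
    and e0: "\<And>n. S0 n = w1 n + w2 n + w3 n + w4 n"
    and e1: "\<And>n. S1 n = of_real a * w1 n + of_real b * w4 n"
    and e2: "\<And>n. S2 n = of_real (a^2) * w1 n + of_real (b^2) * w4 n"
    and l: "S0 \<longlonglongrightarrow> 0" "S1 \<longlonglongrightarrow> 0" "S2 \<longlonglongrightarrow> 0"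
  shows "w1 \<longlonglongrightarrow> 0" "w4 \<longlonglongrightarrow> 0" "(\<lambda>n. w2 n + w3 n) \<longlonglongrightarrow> 0"
proof -
  have "b - a \<noteq> 0" "a - b \<noteq> 0" using ab by auto
  then have c1: "of_real a * of_real (b - a) \<noteq> (0::complex)" and c2: "of_real b * of_real (a - b) \<noteq> (0::complex)"
    using ab by (metis of_real_eq_0_iff mult_eq_0_iff)+
  have w1e: "w1 n = (of_real b * S1 n - S2 n) / (of_real a * of_real (b - a))" for n
  proof -
    have "w1 n * (of_real a * of_real (b - a)) = of_real b * S1 n - S2 n"
      unfolding e1 e2 by (simp add: algebra_simps power2_eq_square)
    then show ?thesis using nonzero_eq_divide_eq[OF c1] by blast
  qed
  have w4e: "w4 n = (of_real a * S1 n - S2 n) / (of_real b * of_real (a - b))" for n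
  proof -
    have "w4 n * (of_real b * of_real (a - b)) = of_real a * S1 n - S2 n"
      unfolding e1 e2 by (simp add: algebra_simps power2_eq_square)
    then show ?thesis using nonzero_eq_divide_eq[OF c2] by blast
  qed
  have "(\<lambda>n. (of_real b * S1 n - S2 n) / (of_real a * of_real (b - a))) \<longlonglongrightarrow> (of_real b * 0 - 0) / (of_real a * of_real (b - a))"
    by (intro tendsto_intros l c1)
  then show t1: "w1 \<longlonglongrightarrow> 0" unfolding w1e[abs_def] by simp
  have "(\<lambda>n. (of_real a * S1 n - S2 n) / (of_real b * of_real (a - b))) \<longlonglongrightarrow> (of_real a * 0 - 0) / (of_real b * of_real (a - b))"
    by (intro tendsto_intros l c2)
  then show t4: "w4 \<longlonglongrightarrow> 0" unfolding w4e[abs_def] by simp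
  have "(\<lambda>n. S0 n - w1 n - w4 n) \<longlonglongrightarrow> 0 - 0 - 0" by (intro tendsto_intros l t1 t4)
  moreover have "S0 n - w1 n - w4 n = w2 n + w3 n" for n unfolding e0 by simp
  ultimately show "(\<lambda>n. w2 n + w3 n) \<longlonglongrightarrow> 0" by simp
qed

lemma const_norm_zero:
  fixes w :: "nat \<Rightarrow> complex"
  assumes "w \<longlonglongrightarrow> 0" "\<And>n. norm (w n) = C" shows "C = 0"
proof -
  have "(\<lambda>n. norm (w n)) \<longlonglongrightarrow> 0" using tendsto_norm[OF assms(1)] by simp
  then show ?thesis using assms(2) by (simp add: LIMSEQ_const_iff)
qed

lemma pair_norm_eq:
  fixes w v :: "nat \<Rightarrow> complex"
  assumes "(\<lambda>n. w n + v n) \<longlonglongrightarrow> 0" "\<And>n. norm (w n) = C" "\<And>n. norm (v n) = D" shows "C = D"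
proof -
  have "(\<lambda>n. norm (w n + v n)) \<longlonglongrightarrow> 0" using tendsto_norm[OF assms(1)] by simp
  moreover have "\<bar>C - D\<bar> \<le> norm (w n + v n)" for n
    using norm_triangle_ineq2[of "w n" "- v n"] norm_triangle_ineq2[of "- v n" "w n"] assms(2,3)[of n]
    by (simp add: abs_le_iff) (metis add.commute diff_minus_eq_add norm_minus_commute norm_minus_cancel)
  ultimately have "\<bar>C - D\<bar> \<le> 0"
    by (intro LIMSEQ_le_const[of "\<lambda>n. norm (w n + v n)"]) auto
  then show ?thesis by simp
qed

lemma zero_iff: "(c1::real) \<noteq> 0 \<Longrightarrow> c2 \<noteq> 0 \<Longrightarrow> \<bar>c1\<bar> * norm (x::complex) = \<bar>c2\<bar> * norm (y::complex) \<Longrightarrow> x = 0 \<longleftrightarrow> y = 0"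
  by auto

locale rs =
  fixes q :: real and \<rho> :: "real \<Rightarrow> real"
  assumes q: "q > 1"
    and rho_pos: "\<forall>x. \<rho> x > 0"
    and rho_per: "\<forall>x. \<rho> (x + 2 * pi) = \<rho> x"
    and rho_d1: "\<forall>x. \<rho> differentiable (at x)"
    and rho_d2: "\<forall>x. deriv \<rho> differentiable (at x)"
    and rho_conv: "\<forall>x. deriv (deriv (\<lambda>s. ln (\<rho> s))) x < sqrt q / (1 + sqrt q)"
begin

lemma D1: "DERIV \<rho> x :> deriv \<rho> x"
  using rho_d1 DERIV_deriv_iff_real_differentiable by blast
lemma D2: "DERIV (deriv \<rho>) x :> deriv (deriv \<rho>) x"
  using rho_d2 DERIV_deriv_iff_real_differentiable by blast

lemma L1_eq: "deriv (\<lambda>s. ln (\<rho> s)) = (\<lambda>x. deriv \<rho> x / \<rho> x)"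
proof
  fix x
  have "DERIV (\<lambda>s. ln (\<rho> s)) x :> deriv \<rho> x / \<rho> x"
    using DERIV_chain2[OF DERIV_ln_divide[OF rho_pos[rule_format, of x]] D1[of x]]
    by simp
  then show "deriv (\<lambda>s. ln (\<rho> s)) x = deriv \<rho> x / \<rho> x" by (rule DERIV_imp_deriv)
qed

lemma L1_D: "DERIV (deriv (\<lambda>s. ln (\<rho> s))) x :>
   (deriv (deriv \<rho>) x * \<rho> x - deriv \<rho> x * deriv \<rho> x) / (\<rho> x * \<rho> x)"
  unfolding L1_eq
  by (rule DERIV_divide[OF D2 D1]) (use rho_pos[rule_format, of x] in simp)

lemma L2_eq: "deriv (deriv (\<lambda>s. ln (\<rho> s))) x =
   (deriv (deriv \<rho>) x * \<rho> x - deriv \<rho> x * deriv \<rho> x) / (\<rho> x * \<rho> x)"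
  by (rule DERIV_imp_deriv[OF L1_D])

lemma yc'_eq: "ycurve' \<rho> \<theta> = (deriv \<rho> \<theta> * cos \<theta> - \<rho> \<theta> * sin \<theta>, deriv \<rho> \<theta> * sin \<theta> + \<rho> \<theta> * cos \<theta>)"
proof -
  have "DERIV (\<lambda>s. \<rho> s * cos s) \<theta> :> deriv \<rho> \<theta> * cos \<theta> - \<rho> \<theta> * sin \<theta>"
    by (rule derivative_eq_intros D1 | simp)+
  moreover have "DERIV (\<lambda>s. \<rho> s * sin s) \<theta> :> deriv \<rho> \<theta> * sin \<theta> + \<rho> \<theta> * cos \<theta>"
    by (rule derivative_eq_intros D1 | simp)+
  ultimately show ?thesis unfolding ycurve'_def by (simp add: DERIV_imp_deriv)
qed

lemma dc: "deriv (\<lambda>s. \<rho> s * cos s) = (\<lambda>s. deriv \<rho> s * cos s - \<rho> s * sin s)"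
proof
  fix \<theta> have "DERIV (\<lambda>s. \<rho> s * cos s) \<theta> :> deriv \<rho> \<theta> * cos \<theta> - \<rho> \<theta> * sin \<theta>"
    by (rule derivative_eq_intros D1 | simp)+
  then show "deriv (\<lambda>s. \<rho> s * cos s) \<theta> = deriv \<rho> \<theta> * cos \<theta> - \<rho> \<theta> * sin \<theta>" by (rule DERIV_imp_deriv)
qed
lemma ds: "deriv (\<lambda>s. \<rho> s * sin s) = (\<lambda>s. deriv \<rho> s * sin s + \<rho> s * cos s)"
proof
  fix \<theta> have "DERIV (\<lambda>s. \<rho> s * sin s) \<theta> :> deriv \<rho> \<theta> * sin \<theta> + \<rho> \<theta> * cos \<theta>"
    by (rule derivative_eq_intros D1 | simp)+
  then show "deriv (\<lambda>s. \<rho> s * sin s) \<theta> = deriv \<rho> \<theta> * sin \<theta> + \<rho> \<theta> * cos \<theta>" by (rule DERIV_imp_deriv)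
qed

lemma yc''_eq: "ycurve'' \<rho> \<theta> =
   (deriv (deriv \<rho>) \<theta> * cos \<theta> - 2 * deriv \<rho> \<theta> * sin \<theta> - \<rho> \<theta> * cos \<theta>,
    deriv (deriv \<rho>) \<theta> * sin \<theta> + 2 * deriv \<rho> \<theta> * cos \<theta> - \<rho> \<theta> * sin \<theta>)"
proof -
  have "DERIV (\<lambda>s. deriv \<rho> s * cos s - \<rho> s * sin s) \<theta> :> deriv (deriv \<rho>) \<theta> * cos \<theta> - 2 * deriv \<rho> \<theta> * sin \<theta> - \<rho> \<theta> * cos \<theta>"
    by (rule derivative_eq_intros D1 D2 | simp)+
  moreover have "DERIV (\<lambda>s. deriv \<rho> s * sin s + \<rho> s * cos s) \<theta> :> deriv (deriv \<rho>) \<theta> * sin \<theta> + 2 * deriv \<rho> \<theta> * cos \<theta> - \<rho> \<theta> * sin \<theta>"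
    by (rule derivative_eq_intros D1 D2 | simp)+
  ultimately show ?thesis unfolding ycurve''_def dc ds by (simp add: DERIV_imp_deriv)
qed

abbreviation "Q \<equiv> sqrt q"
lemma Q1: "Q > 1" using q by simp
lemma Qsq: "Q * Q = q" using q by simp
lemma Qsq2: "Q^2 = q" using q by simp

lemma tq: "0 < theta_q q" "theta_q q < pi/2" "cos (theta_q q) = 1 / Q" "sin (theta_q q) > 0"
proof -
  have a: "0 < 1/Q" "1/Q < 1" using Q1 by auto
  show c: "cos (theta_q q) = 1 / Q" unfolding theta_q_def by (rule cos_arccos) (use a in linarith)+
  have "arccos (1/Q) \<le> pi/2" by (rule arccos_le_pi2) (use a in linarith)+
  moreover have "arccos (1/Q) \<noteq> pi/2" using c a unfolding theta_q_def by (metis cos_pi_half less_irrefl)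
  ultimately show "theta_q q < pi/2" unfolding theta_q_def by simp
  have "0 \<le> arccos (1/Q)" by (rule arccos_lbound) (use a in linarith)+
  moreover have "arccos (1/Q) \<noteq> 0" using c a unfolding theta_q_def by (metis cos_zero less_irrefl)
  ultimately show "0 < theta_q q" unfolding theta_q_def by simp
  then show "sin (theta_q q) > 0" using \<open>theta_q q < pi/2\<close> by (intro sin_gt_zero) auto
qed

lemma R1: assumes "theta_q q - pi < x" "x < pi - theta_q q" shows "Q * cos x + 1 > 0"
proof -
  have "cos (pi - theta_q q) < cos \<bar>x\<bar>"
    using assms tq by (subst cos_mono_less_eq) auto
  then have "- (1/Q) < cos x" using tq by simp
  then show ?thesis using Q1 by (simp add: field_simps)
qed

lemma R2: assumes "pi - theta_q q < x" "x < pi + theta_q q" shows "Q * cos x + 1 < 0"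
proof -
  have "cos (theta_q q) < cos \<bar>x - pi\<bar>"
    using assms tq by (subst cos_mono_less_eq) auto
  then have "1/Q < - cos x" using tq by (simp add: cos_diff)
  then show ?thesis using Q1 by (simp add: field_simps)
qed

lemma hfun_D: assumes "Q * cos x + 1 \<noteq> 0"
  shows "DERIV (hfun q) x :> (q + Q * cos x) / (Q * cos x + 1)^2"
proof -
  have d: "DERIV (\<lambda>x. Q * sin x / (Q * cos x + 1)) x :> (Q * cos x * (Q * cos x + 1) - Q * sin x * (- Q * sin x)) / ((Q * cos x + 1) * (Q * cos x + 1))"
    by (rule derivative_eq_intros refl | use assms in simp)+
  have num: "(Q * cos x * (Q * cos x + 1) - Q * sin x * (- Q * sin x)) = q + Q * cos x"
    using alg1[of "cos x" "sin x" Q] Qsq by simp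
  have h: "hfun q = (\<lambda>x. Q * sin x / (Q * cos x + 1))" by (rule ext) (simp only: hfun_def)
  show ?thesis using d unfolding h num power2_eq_square .
qed

lemma hfun_D_bound: assumes "Q * cos x + 1 \<noteq> 0"
  shows "Q / (1 + Q) \<le> (q + Q * cos x) / (Q * cos x + 1)^2"
  using bound_gen[OF Q1 _ _ assms] Qsq by simp

abbreviation "Lp \<equiv> deriv (\<lambda>s. ln (\<rho> s))"

lemma Lp_per: "Lp (x + 2 * pi * of_int k) = Lp x"
proof -
  have "\<forall>x. (\<lambda>s. ln (\<rho> s)) (x + 2 * pi) = (\<lambda>s. ln (\<rho> s)) x" using rho_per by simp
  from deriv_per[OF this] show ?thesis by (rule per_int)
qed

lemma rho_per_int: "\<rho> (x + 2 * pi * of_int k) = \<rho> x"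
  using rho_per by (rule per_int)

lemma hfun_per_int: "hfun q (x + 2 * pi * of_int k) = hfun q x"
  using hfun_per by (rule per_int)

lemma Lp_cont: "isCont Lp x"
  using L1_D DERIV_isCont by blast

definition G :: "real \<Rightarrow> real \<Rightarrow> real" where "G a x = Lp (a + x) - hfun q x"

lemma G_D: assumes "Q * cos x + 1 \<noteq> 0"
  shows "\<exists>y. DERIV (G a) x :> y \<and> y < 0"
proof -
  have d1: "DERIV (\<lambda>x. Lp (a + x)) x :> deriv (deriv (\<lambda>s. ln (\<rho> s))) (a + x)"
    using DERIV_shift[of Lp "deriv (deriv (\<lambda>s. ln (\<rho> s))) (x + a)" x a] L1_D[of "x + a"] DERIV_imp_deriv[OF L1_D[of "x+a"]]
    by (simp add: add.commute)
  have "DERIV (G a) x :> deriv (deriv (\<lambda>s. ln (\<rho> s))) (a + x) - (q + Q * cos x) / (Q * cos x + 1)^2"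
    unfolding G_def[abs_def] by (rule DERIV_diff[OF d1 hfun_D[OF assms]])
  moreover have "deriv (deriv (\<lambda>s. ln (\<rho> s))) (a + x) < (q + Q * cos x) / (Q * cos x + 1)^2"
    using rho_conv[rule_format, of "a+x"] hfun_D_bound[OF assms] by (simp add: add.commute)
  ultimately show ?thesis by force
qed

lemma G_decr: assumes "x1 < x2" "\<forall>x\<in>{x1..x2}. Q * cos x + 1 \<noteq> 0"
  shows "G a x2 < G a x1"
  using DERIV_neg_imp_decreasing[OF assms(1), of "G a"] G_D assms(2) by auto

lemma G_cont: assumes "\<forall>x\<in>{x1..x2}. Q * cos x + 1 \<noteq> 0"
  shows "continuous_on {x1..x2} (G a)"
  using G_D assms by (meson DERIV_isCont continuous_at_imp_continuous_on)

definition lo :: "nat \<Rightarrow> real" where "lo j = (if j = 1 then theta_q q - pi else pi - theta_q q)"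
definition hi :: "nat \<Rightarrow> real" where "hi j = (if j = 1 then pi - theta_q q else pi + theta_q q)"

lemma lohi: "lo j < hi j" using tq unfolding lo_def hi_def by auto

lemma D_ne: assumes "x \<in> {lo j<..<hi j}" shows "Q * cos x + 1 \<noteq> 0"
proof (cases "j = 1")
  case True
  then have "Q * cos x + 1 > 0" using assms unfolding lo_def hi_def by (intro R1) auto
  then show ?thesis by linarith
next
  case False
  then have "Q * cos x + 1 < 0" using assms unfolding lo_def hi_def by (intro R2) auto
  then show ?thesis by linarith
qed

lemma G_uniq: assumes "x1 \<in> {lo j<..<hi j}" "x2 \<in> {lo j<..<hi j}" "G a x1 = 0" "G a x2 = 0"
  shows "x1 = x2"
proof (rule ccontr)
  assume "x1 \<noteq> x2"
  then consider "x1 < x2" | "x2 < x1" by linarith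
  then show False
  proof cases
    case 1
    have "\<forall>x\<in>{x1..x2}. Q * cos x + 1 \<noteq> 0"
    proof
      fix x assume "x \<in> {x1..x2}" then have "x \<in> {lo j<..<hi j}" using assms(1,2) by auto
      then show "Q * cos x + 1 \<noteq> 0" by (rule D_ne)
    qed
    from G_decr[OF 1 this, of a] assms show False by simp
  next
    case 2
    have "\<forall>x\<in>{x2..x1}. Q * cos x + 1 \<noteq> 0"
    proof
      fix x assume "x \<in> {x2..x1}" then have "x \<in> {lo j<..<hi j}" using assms(1,2) by auto
      then show "Q * cos x + 1 \<noteq> 0" by (rule D_ne)
    qed
    from G_decr[OF 2 this, of a] assms show False by simp
  qed
qed

lemma Tmap_char:
  assumes j: "j = 1 \<or> j = 2" and x0: "x0 \<in> {lo j<..<hi j}" and G0: "G (eta_angle l t) x0 = 0"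
  shows "\<exists>k::int. Tmap q \<rho> j l t = eta_angle l t + x0 + 2 * pi * of_int k
     \<and> Tmap q \<rho> j l t \<in> {0..<2*pi}"
proof -
  define a where "a = eta_angle l t"
  define k :: int where "k = - floor ((a + x0) / (2 * pi))"
  define th0 where "th0 = a + x0 + 2 * pi * of_int k"
  have rng: "th0 \<in> {0..<2*pi}"
  proof -
    have f1: "of_int (floor ((a + x0) / (2 * pi))) \<le> (a + x0) / (2 * pi)" by (rule of_int_floor_le)
    have f2: "(a + x0) / (2 * pi) < of_int (floor ((a + x0) / (2 * pi))) + 1" by (rule real_of_int_floor_add_one_gt)
    define y where "y = (a + x0) / (2 * pi)"
    define F where "F = 2 * pi * of_int (floor y)"
    define Y where "Y = 2 * pi * y"
    have yy: "Y = a + x0" unfolding y_def Y_def by simp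
    have g1: "F \<le> Y" using f1 unfolding y_def[symmetric] F_def Y_def by (intro mult_left_mono) auto
    have g2': "2 * pi * y < 2 * pi * (of_int (floor y) + 1)" using f2 unfolding y_def[symmetric] by (intro mult_strict_left_mono) auto
    have g2'': "2 * pi * (of_int (floor y) + 1) = F + 2 * pi" unfolding F_def by (simp add: algebra_simps)
    have g2: "Y < F + 2 * pi" using g2' g2'' unfolding Y_def by simp
    have "th0 = a + x0 - F" unfolding th0_def k_def y_def F_def by simp
    then show ?thesis using g1 g2 yy by simp
  qed
  have inr0: "th0 - a + 2 * pi * of_int (-k) = x0" unfolding th0_def by simp
  have inr: "in_mod2pi (th0 - a) (lo j) (hi j)"
    unfolding in_mod2pi_def using x0 inr0 by metis
  have eq: "Lp th0 = hfun q (th0 - a)"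
  proof -
    have "Lp th0 = Lp (a + x0)" unfolding th0_def by (rule Lp_per)
    also have "\<dots> = hfun q x0" using G0 unfolding G_def a_def by simp
    also have "\<dots> = hfun q (th0 - a)" unfolding th0_def using hfun_per_int[of x0 k] by simp
    finally show ?thesis .
  qed
  define P where "P = (\<lambda>\<theta>. \<theta> \<in> {0..<2*pi}
      \<and> deriv (\<lambda>s. ln (\<rho> s)) \<theta> = hfun q (\<theta> - eta_angle l t)
      \<and> (if j = 1
         then in_mod2pi (\<theta> - eta_angle l t) (theta_q q - pi) (pi - theta_q q)
         else in_mod2pi (\<theta> - eta_angle l t) (pi - theta_q q) (pi + theta_q q)))"
  have P_iff: "P \<theta> \<longleftrightarrow> \<theta> \<in> {0..<2*pi} \<and> Lp \<theta> = hfun q (\<theta> - a) \<and> in_mod2pi (\<theta> - a) (lo j) (hi j)" for \<theta>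
  proof -
    have "(if j = 1
         then in_mod2pi (\<theta> - a) (theta_q q - pi) (pi - theta_q q)
         else in_mod2pi (\<theta> - a) (pi - theta_q q) (pi + theta_q q)) = in_mod2pi (\<theta> - a) (lo j) (hi j)"
      by (simp add: lo_def hi_def)
    then show ?thesis unfolding P_def a_def by simp
  qed
  have Pth0: "P th0" unfolding P_iff using rng inr eq by blast
  have uniq: "\<theta> = th0" if "P \<theta>" for \<theta>
  proof -
    from that have th: "\<theta> \<in> {0..<2*pi}" "Lp \<theta> = hfun q (\<theta> - a)" "in_mod2pi (\<theta> - a) (lo j) (hi j)" unfolding P_iff by blast+
    from th(3) obtain k' :: int where k': "\<theta> - a + 2 * pi * of_int k' \<in> {lo j<..<hi j}" unfolding in_mod2pi_def by blast
    define x' where "x' = \<theta> - a + 2 * pi * of_int k'"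
    have "G a x' = 0"
    proof -
      have "a + x' = \<theta> + 2 * pi * of_int k'" unfolding x'_def by simp
      then have "Lp (a + x') = Lp \<theta>" using Lp_per[of \<theta> k'] by simp
      moreover have "hfun q x' = hfun q (\<theta> - a)" unfolding x'_def by (rule hfun_per_int)
      ultimately show ?thesis unfolding G_def using th by simp
    qed
    moreover have kx: "x' \<in> {lo j<..<hi j}" using k' unfolding x'_def .
    moreover have G0': "G a x0 = 0" using G0 unfolding a_def .
    ultimately have "x' = x0" using G_uniq[OF kx x0] by blast
    then have e1: "\<theta> - a + 2 * pi * of_int k' = x0" unfolding x'_def .
    have e2: "th0 = a + x0 + 2 * pi * of_int k" unfolding th0_def ..
    have e3: "2 * pi * of_int (-(k + k')) = - (2 * pi * of_int k') - 2 * pi * of_int k" by (simp add: algebra_simps)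
    have d: "\<theta> - th0 = 2 * pi * of_int (-(k + k'))" using e1 e2 e3 by linarith
    have "\<bar>\<theta> - th0\<bar> < 2 * pi" using th(1) rng by (simp add: abs_less_iff)
    then have "\<bar>of_int (-(k + k'))\<bar> < (1::real)" unfolding d using pi_gt_zero by (simp add: abs_mult)
    then have "-(k + k') = 0" by linarith
    then show ?thesis using d by simp
  qed
  have T: "Tmap q \<rho> j l t = th0"
    unfolding Tmap_def P_def[symmetric] using Pth0 uniq by (rule the_equality)
  show ?thesis
  proof (intro exI[of _ k] conjI)
    show "Tmap q \<rho> j l t = eta_angle l t + x0 + 2 * pi * of_int k" using T unfolding th0_def a_def .
    show "Tmap q \<rho> j l t \<in> {0..<2*pi}" using T rng by simp
  qed
qed

lemma Lp_tend: "((\<lambda>x. Lp (a + x)) \<longlongrightarrow> Lp (a + e)) (at e within S)"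
proof -
  have "((\<lambda>x. a + x) \<longlongrightarrow> a + e) (at e within S)" by (intro tendsto_intros)
  then show ?thesis using isCont_tendsto_compose[OF Lp_cont] by blast
qed

lemma R1': "x \<in> {lo j<..<hi j} \<Longrightarrow> j = 1 \<Longrightarrow> Q * cos x + 1 > 0"
  unfolding lo_def hi_def by (intro R1) auto
lemma R2': "x \<in> {lo j<..<hi j} \<Longrightarrow> j \<noteq> 1 \<Longrightarrow> - (Q * cos x + 1) > 0"
  unfolding lo_def hi_def using R2[of x] by auto

lemma root_exists:
  assumes ev1: "eventually (\<lambda>x. G a x > 0) (at_right (lo j))"
    and ev2: "eventually (\<lambda>x. G a x < 0) (at_left (hi j))"
  shows "\<exists>x0\<in>{lo j<..<hi j}. G a x0 = 0"
proof -
  have "eventually (\<lambda>x. G a x > 0 \<and> x \<in> {lo j<..<hi j}) (at_right (lo j))"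
    using ev1 eventually_at_right_real[OF lohi] by (rule eventually_conj)
  then obtain x1 where x1: "G a x1 > 0" "x1 \<in> {lo j<..<hi j}"
    using eventually_happens'[OF trivial_limit_at_right_real[of "lo j"]] by blast
  have "eventually (\<lambda>x. G a x < 0 \<and> x \<in> {lo j<..<hi j}) (at_left (hi j))"
    using ev2 eventually_at_left_real[OF lohi] by (rule eventually_conj)
  then obtain x2 where x2: "G a x2 < 0" "x2 \<in> {lo j<..<hi j}"
    using eventually_happens'[OF trivial_limit_at_left_real[of "hi j"]] by blast
  have Dn: "\<forall>x\<in>{x1..x2}. Q * cos x + 1 \<noteq> 0"
  proof
    fix x assume "x \<in> {x1..x2}" then have "x \<in> {lo j<..<hi j}" using x1 x2 by auto
    then show "Q * cos x + 1 \<noteq> 0" by (rule D_ne)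
  qed
  have lt: "x1 < x2"
  proof (rule ccontr)
    assume "\<not> x1 < x2"
    then consider "x1 = x2" | "x2 < x1" by linarith
    then show False
    proof cases
      case 1 then show False using x1 x2 by simp
    next
      case 2
      have "\<forall>x\<in>{x2..x1}. Q * cos x + 1 \<noteq> 0"
      proof
        fix x assume "x \<in> {x2..x1}" then have "x \<in> {lo j<..<hi j}" using x1 x2 by auto
        then show "Q * cos x + 1 \<noteq> 0" by (rule D_ne)
      qed
      from G_decr[OF 2 this, of a] x1 x2 show False by simp
    qed
  qed
  have "\<exists>x. x1 \<le> x \<and> x \<le> x2 \<and> G a x = 0"
    by (rule IVT2') (use x1 x2 lt G_cont[OF Dn] in auto)
  then show ?thesis using x1 x2 by force
qed

lemma tq_trig: "sin (pi - theta_q q) = sin (theta_q q)" "cos (pi - theta_q q) = - (1/Q)"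
  "sin (theta_q q - pi) = - sin (theta_q q)" "cos (theta_q q - pi) = - (1/Q)"
  "sin (pi + theta_q q) = - sin (theta_q q)" "cos (pi + theta_q q) = - (1/Q)"
  using tq by (simp_all add: sin_diff cos_diff sin_add cos_add)

lemma Qinv: "Q * (- (1/Q)) + 1 = 0" using Q1 by simp

lemma G_exists: assumes "j = 1 \<or> j = 2" shows "\<exists>x0\<in>{lo j<..<hi j}. G a x0 = 0"
proof (rule root_exists)
  have sp: "Q * sin (theta_q q) > 0" using tq Q1 by simp
  show "eventually (\<lambda>x. G a x > 0) (at_right (lo j))"
  proof (cases "j = 1")
    case True
    have ev: "eventually (\<lambda>x. Q * cos x + 1 > 0) (at_right (lo j))"
      using eventually_at_right_real[OF lohi[of j]] by eventually_elim (use True R1' in blast)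
    show ?thesis
    proof (rule lim_top[where f="\<lambda>x. - Q * sin x" and g="\<lambda>x. Q * cos x + 1" and L="\<lambda>x. Lp (a + x)"])
      have "((\<lambda>x. - Q * sin x) \<longlongrightarrow> - Q * sin (lo j)) (at_right (lo j))" by (intro tendsto_intros)
      then show "((\<lambda>x. - Q * sin x) \<longlongrightarrow> Q * sin (theta_q q)) (at_right (lo j))" using True tq_trig by (simp add: lo_def)
      have "((\<lambda>x. Q * cos x + 1) \<longlongrightarrow> Q * cos (lo j) + 1) (at_right (lo j))" by (intro tendsto_intros)
      then show "((\<lambda>x. Q * cos x + 1) \<longlongrightarrow> 0) (at_right (lo j))" using True tq_trig Qinv by (simp add: lo_def)
      show "G a x = Lp (a + x) + - Q * sin x / (Q * cos x + 1)" for x unfolding G_def hfun_def by simp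
    qed (use sp ev Lp_tend in auto)
  next
    case False
    have ev: "eventually (\<lambda>x. - (Q * cos x + 1) > 0) (at_right (lo j))"
      using eventually_at_right_real[OF lohi[of j]] by eventually_elim (use False R2' in blast)
    show ?thesis
    proof (rule lim_top[where f="\<lambda>x. Q * sin x" and g="\<lambda>x. - (Q * cos x + 1)" and L="\<lambda>x. Lp (a + x)"])
      have "((\<lambda>x. Q * sin x) \<longlongrightarrow> Q * sin (lo j)) (at_right (lo j))" by (intro tendsto_intros)
      then show "((\<lambda>x. Q * sin x) \<longlongrightarrow> Q * sin (theta_q q)) (at_right (lo j))" using False tq_trig by (simp add: lo_def)
      have "((\<lambda>x. - (Q * cos x + 1)) \<longlongrightarrow> - (Q * cos (lo j) + 1)) (at_right (lo j))" by (intro tendsto_intros)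
      then show "((\<lambda>x. - (Q * cos x + 1)) \<longlongrightarrow> 0) (at_right (lo j))" using False tq_trig Qinv by (simp add: lo_def)
      show "G a x = Lp (a + x) + Q * sin x / - (Q * cos x + 1)" for x
        unfolding G_def hfun_def minus_divide_right[symmetric] by simp
    qed (use sp ev Lp_tend in auto)
  qed
  show "eventually (\<lambda>x. G a x < 0) (at_left (hi j))"
  proof -
    have "eventually (\<lambda>x. - G a x > 0) (at_left (hi j))"
    proof (cases "j = 1")
      case True
      have ev: "eventually (\<lambda>x. Q * cos x + 1 > 0) (at_left (hi j))"
        using eventually_at_left_real[OF lohi[of j]] by eventually_elim (use True R1' in blast)
      show ?thesis
      proof (rule lim_top[where f="\<lambda>x. Q * sin x" and g="\<lambda>x. Q * cos x + 1" and L="\<lambda>x. - Lp (a + x)"])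
        have "((\<lambda>x. Q * sin x) \<longlongrightarrow> Q * sin (hi j)) (at_left (hi j))" by (intro tendsto_intros)
        then show "((\<lambda>x. Q * sin x) \<longlongrightarrow> Q * sin (theta_q q)) (at_left (hi j))" using True tq_trig by (simp add: hi_def)
        have "((\<lambda>x. Q * cos x + 1) \<longlongrightarrow> Q * cos (hi j) + 1) (at_left (hi j))" by (intro tendsto_intros)
        then show "((\<lambda>x. Q * cos x + 1) \<longlongrightarrow> 0) (at_left (hi j))" using True tq_trig Qinv by (simp add: hi_def)
        show "- G a x = - Lp (a + x) + Q * sin x / (Q * cos x + 1)" for x unfolding G_def hfun_def by simp
        show "((\<lambda>x. - Lp (a + x)) \<longlongrightarrow> - Lp (a + hi j)) (at_left (hi j))" by (intro tendsto_minus Lp_tend)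
      qed (use sp ev in auto)
    next
      case False
      have ev: "eventually (\<lambda>x. - (Q * cos x + 1) > 0) (at_left (hi j))"
        using eventually_at_left_real[OF lohi[of j]] by eventually_elim (use False R2' in blast)
      show ?thesis
      proof (rule lim_top[where f="\<lambda>x. - Q * sin x" and g="\<lambda>x. - (Q * cos x + 1)" and L="\<lambda>x. - Lp (a + x)"])
        have "((\<lambda>x. - Q * sin x) \<longlongrightarrow> - Q * sin (hi j)) (at_left (hi j))" by (intro tendsto_intros)
        then show "((\<lambda>x. - Q * sin x) \<longlongrightarrow> Q * sin (theta_q q)) (at_left (hi j))" using False tq_trig by (simp add: hi_def)
        have "((\<lambda>x. - (Q * cos x + 1)) \<longlongrightarrow> - (Q * cos (hi j) + 1)) (at_left (hi j))" by (intro tendsto_intros)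
        then show "((\<lambda>x. - (Q * cos x + 1)) \<longlongrightarrow> 0) (at_left (hi j))" using False tq_trig Qinv by (simp add: hi_def)
        show "- G a x = - Lp (a + x) + - Q * sin x / - (Q * cos x + 1)" for x
          unfolding G_def hfun_def minus_divide_right[symmetric] by simp
        show "((\<lambda>x. - Lp (a + x)) \<longlongrightarrow> - Lp (a + hi j)) (at_left (hi j))" by (intro tendsto_minus Lp_tend)
      qed (use sp ev in auto)
    qed
    then show ?thesis by eventually_elim simp
  qed
qed

lemma trig_shift:
  assumes "T - x = t + (if l = 2 then pi else 0) + 2 * pi * of_int k"
  shows "cos t = (if l = 2 then -1 else 1) * (cos T * cos x + sin T * sin x)"
        "sin t = (if l = 2 then -1 else 1) * (sin T * cos x - cos T * sin x)"
proof -
  have c: "cos (T - x) = cos (t + (if l = 2 then pi else 0))"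
    unfolding assms by (rule per_int) simp
  have s: "sin (T - x) = sin (t + (if l = 2 then pi else 0))"
    unfolding assms by (rule per_int) simp
  show "cos t = (if l = 2 then -1 else 1) * (cos T * cos x + sin T * sin x)"
    using c unfolding cos_diff by (cases "l = 2") auto
  show "sin t = (if l = 2 then -1 else 1) * (sin T * cos x - cos T * sin x)"
    using s unfolding sin_diff by (cases "l = 2") auto
qed

lemma det_Psi_ne:
  assumes T: "T = eta_angle l t + x + 2 * pi * of_int k" and D: "Q * cos x + 1 \<noteq> 0"
    and st: "Lp T = hfun q x"
  shows "Psi_fn q \<rho> t T (T + (if l = 2 then pi else 0)) \<noteq> 0"
        "detD2psi q \<rho> t T (T + (if l = 2 then pi else 0)) \<noteq> 0"
proof -
  define e :: real where "e = (if l = 2 then -1 else 1)"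
  define txi where "txi = T + (if l = 2 then pi else 0)"
  define r where "r = \<rho> T"
  define r1 where "r1 = deriv \<rho> T"
  define r2 where "r2 = deriv (deriv \<rho>) T"
  have rpos: "r > 0" unfolding r_def using rho_pos by simp
  have ee: "e * e = 1" unfolding e_def by simp
  have tx: "T - x = t + (if l = 2 then pi else 0) + 2 * pi * of_int k"
    using T unfolding eta_angle_def by (cases "l = 2") auto
  have ct: "cos t = e * (cos T * cos x + sin T * sin x)" and stt: "sin t = e * (sin T * cos x - cos T * sin x)"
    using trig_shift[OF tx] unfolding e_def by auto
  have cx: "cos txi = e * cos T" and sx: "sin txi = e * sin T"
    unfolding txi_def e_def by (cases "l = 2"; simp)+
  have stat: "r1 * (Q * cos x + 1) = Q * sin x * r"
  proof -
    have "r1 / r = Q * sin x / (Q * cos x + 1)" using st unfolding L1_eq hfun_def r_def r1_def by simp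
    then show ?thesis using rpos D by (simp add: field_simps)
  qed
  have detexp: "detD2psi q \<rho> t T txi =
     ((Q * cos t + cos txi) * (r2 * cos T - 2 * r1 * sin T - r * cos T) + (Q * sin t + sin txi) * (r2 * sin T + 2 * r1 * cos T - r * sin T))
          * (- (cos txi * (r * cos T) + sin txi * (r * sin T))) - ((- sin txi) * (r1 * cos T - r * sin T) + cos txi * (r1 * sin T + r * cos T))^2"
    unfolding detD2psi_def dot2_def perp2_def dir_def yc''_eq yc'_eq ycurve_def r_def r1_def r2_def by simp
  have Psiexp: "Psi_fn q \<rho> t T txi =
     - ((Q * cos t - cos txi) * (- (r1 * sin T + r * cos T)) + (Q * sin t - sin txi) * (r1 * cos T - r * sin T))"
    unfolding Psi_fn_def dot2_def perp2_def yc'_eq r_def r1_def by simp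
  have dD: "detD2psi q \<rho> t T txi * (Q * cos x + 1) = r * r * Q * (Q + cos x) - (Q * cos x + 1)^2 * (r2 * r - r1 * r1)"
    unfolding detexp by (rule det_alg[OF ee _ _ stat ct stt cx sx]) simp_all
  have pD: "Psi_fn q \<rho> t T txi * (Q * cos x + 1) = e * r * (Q * Q - 1)"
    unfolding Psiexp by (rule Psi_alg[OF ee _ _ stat ct stt cx sx]) simp_all
  have "e * r * (Q * Q - 1) \<noteq> 0" using rpos Q1 unfolding e_def by simp
  then show "Psi_fn q \<rho> t T (T + (if l = 2 then pi else 0)) \<noteq> 0" using pD unfolding txi_def by force
  have L2: "(r2 * r - r1 * r1) / (r * r) < (q + Q * cos x) / (Q * cos x + 1)^2"
    using rho_conv[rule_format, of T] hfun_D_bound[OF D] unfolding L2_eq r_def r1_def r2_def by linarith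
  have Dp: "(Q * cos x + 1)^2 > 0" using D by simp
  have "(Q * cos x + 1)^2 * (r2 * r - r1 * r1) < (q + Q * cos x) * (r * r)"
    by (rule frac_cross[OF _ Dp L2]) (use rpos in simp)
  moreover have "(q + Q * cos x) * (r * r) = r * r * Q * (Q + cos x)" using Qsq by (simp add: algebra_simps)
  ultimately have "detD2psi q \<rho> t T txi * (Q * cos x + 1) > 0" unfolding dD by linarith
  then show "detD2psi q \<rho> t T (T + (if l = 2 then pi else 0)) \<noteq> 0" unfolding txi_def by force
qed

lemma G_mono: assumes "x \<in> {lo j<..<hi j}" "y \<in> {lo j<..<hi j}" "x \<le> y" shows "G a y \<le> G a x"
proof (cases "x = y")
  case False
  then have xy: "x < y" using assms by simp
  have "\<forall>z\<in>{x..y}. Q * cos z + 1 \<noteq> 0"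
  proof
    fix z assume "z \<in> {x..y}" then have "z \<in> {lo j<..<hi j}" using assms by auto
    then show "Q * cos z + 1 \<noteq> 0" by (rule D_ne)
  qed
  from G_decr[OF xy this] show ?thesis by (rule less_imp_le)
qed simp

lemma root_gt: assumes "z0 \<in> {lo j<..<hi j}" "z \<in> {lo j<..<hi j}" "G a z = 0" "G a z0 > 0" shows "z0 < z"
proof (rule ccontr)
  assume "\<not> z0 < z" then have "z \<le> z0" by simp
  from G_mono[OF assms(2,1) this, of a] assms show False by simp
qed

lemma root_lt: assumes "z0 \<in> {lo j<..<hi j}" "z \<in> {lo j<..<hi j}" "G a z = 0" "G a z0 < 0" shows "z < z0"
proof (rule ccontr)
  assume "\<not> z < z0" then have "z0 \<le> z" by simp
  from G_mono[OF assms(1,2) this, of a] assms show False by simp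
qed

lemma P_D: "DERIV (\<lambda>x. \<rho> (t + x) * sin x) x :> \<rho> (t + x) * ((Lp (t + x) - hfun q x) * sin x + (Q * sin x / (Q * cos x + 1) * sin x + cos x))"
proof -
  have d: "DERIV (\<lambda>x. \<rho> (t + x)) x :> deriv \<rho> (t + x)"
    using DERIV_shift[of \<rho> "deriv \<rho> (x + t)" x t] D1[of "x+t"] by (simp add: add.commute)
  have "DERIV (\<lambda>x. \<rho> (t + x) * sin x) x :> deriv \<rho> (t + x) * sin x + \<rho> (t + x) * cos x"
    by (rule derivative_eq_intros d refl | simp)+
  moreover have "deriv \<rho> (t + x) * sin x + \<rho> (t + x) * cos x = \<rho> (t + x) * ((Lp (t + x) - hfun q x) * sin x + (Q * sin x / (Q * cos x + 1) * sin x + cos x))"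
  proof -
    have "\<rho> (t + x) > 0" using rho_pos by simp
    then show ?thesis unfolding L1_eq hfun_def by (simp add: field_simps)
  qed
  ultimately show ?thesis by simp
qed

lemma P_inc: assumes mM: "m < M" and sub: "{m..M} \<subseteq> {lo 1<..<hi 1}"
  and sg: "\<forall>x\<in>{m..M}. G t x * sin x \<ge> 0"
  shows "\<rho> (t + m) * sin m < \<rho> (t + M) * sin M"
proof (rule DERIV_pos_imp_increasing[OF mM])
  fix x assume x: "m \<le> x" "x \<le> M"
  then have xi: "x \<in> {lo 1<..<hi 1}" using sub by auto
  have Dp: "Q * cos x + 1 > 0" by (rule R1'[OF xi]) simp
  have a: "Q * sin x / (Q * cos x + 1) * sin x + cos x = (Q + cos x) / (Q * cos x + 1)"
    by (rule hsin_alg) (use Dp in auto)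
  have "Q + cos x > 0" using Q1 cos_ge_minus_one[of x] by linarith
  then have b: "(Q + cos x) / (Q * cos x + 1) > 0" using Dp by (rule divide_pos_pos)
  have c: "(Lp (t + x) - hfun q x) * sin x \<ge> 0" using sg x unfolding G_def by auto
  have "\<rho> (t + x) > 0" using rho_pos by simp
  then have "\<rho> (t + x) * ((Lp (t + x) - hfun q x) * sin x + (Q * sin x / (Q * cos x + 1) * sin x + cos x)) > 0"
    using a b c by simp
  then show "\<exists>y. DERIV (\<lambda>x. \<rho> (t + x) * sin x) x :> y \<and> 0 < y" using P_D by blast
qed

lemma hfun0: "hfun q 0 = 0" unfolding hfun_def by simp
lemma hfunpi: "hfun q pi = 0" unfolding hfun_def by simp
lemma hfun_upi: "hfun q (u + pi) = (- (Q * sin u)) / (- (Q * cos u) + 1)"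
  unfolding hfun_def by simp

lemma sep:
  assumes x1: "x11 \<in> {lo 1<..<hi 1}" "G t x11 = 0"
    and u: "u + pi \<in> {lo 2<..<hi 2}" "G (t - pi) (u + pi) = 0"
    and nz: "Lp t \<noteq> 0"
  shows "\<rho> (t + x11) * sin x11 \<noteq> \<rho> (t + u) * sin u" "\<rho> (t + x11) * sin x11 \<noteq> 0" "\<rho> (t + u) * sin u \<noteq> 0"
proof -
  have tq1: "0 < theta_q q" "theta_q q < pi/2" using tq by auto
  have zI1: "0 \<in> {lo 1<..<hi 1}" using tq1 unfolding lo_def hi_def by auto
  have pI2: "pi \<in> {lo 2<..<hi 2}" using tq1 unfolding lo_def hi_def by auto
  have ub: "- theta_q q < u" "u < theta_q q" using u(1) unfolding lo_def hi_def by auto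
  have uI1: "u \<in> {lo 1<..<hi 1}" using ub tq1 unfolding lo_def hi_def by auto
  have Gt0: "G t 0 = Lp t" unfolding G_def hfun0 by simp
  have Gpi: "G (t - pi) pi = Lp t" unfolding G_def hfunpi by simp
  have Gu: "Lp (t + u) = hfun q (u + pi)" using u(2) unfolding G_def by (simp add: algebra_simps)
  have cu: "Q * cos u > 1"
  proof -
    have "cos (theta_q q) < cos \<bar>u\<bar>" using ub tq1 by (subst cos_mono_less_eq) auto
    then have "1 / Q < cos u" using tq by simp
    then show ?thesis using Q1 by (simp add: field_simps)
  qed
  have rp: "\<rho> (t + x) > 0" for x using rho_pos by simp
  consider "Lp t > 0" | "Lp t < 0" using nz by linarith
  then have all: "\<rho> (t + x11) * sin x11 \<noteq> \<rho> (t + u) * sin u \<and> \<rho> (t + x11) * sin x11 \<noteq> 0 \<and> \<rho> (t + u) * sin u \<noteq> 0"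
  proof cases
    case 1
    have xp: "0 < x11" using root_gt[OF zI1 x1(1) x1(2)] Gt0 1 by simp
    have up: "0 < u" using root_gt[OF pI2 u(1) u(2)] Gpi 1 by simp
    have sup: "sin u > 0" using up ub tq1 by (intro sin_gt_zero) auto
    have ux: "u < x11"
    proof (rule ccontr)
      assume "\<not> u < x11" then have "x11 \<le> u" by simp
      from G_mono[OF x1(1) uI1 this, of t] x1(2) have "Lp (t + u) \<le> hfun q u" unfolding G_def by simp
      moreover have "hfun q u < hfun q (u + pi)"
        unfolding hfun_upi unfolding hfun_def using hcmp1[OF cu, of "Q * sin u"] sup Q1 by simp
      ultimately show False using Gu by simp
    qed
    have "\<rho> (t + u) * sin u < \<rho> (t + x11) * sin x11"
    proof (rule P_inc[OF ux])
      show "{u..x11} \<subseteq> {lo 1<..<hi 1}" using uI1 x1(1) by auto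
      show "\<forall>x\<in>{u..x11}. 0 \<le> G t x * sin x"
      proof
        fix x assume x: "x \<in> {u..x11}"
        then have xi: "x \<in> {lo 1<..<hi 1}" using uI1 x1(1) by auto
        have "sin x > 0" using x up x1(1) tq1 unfolding hi_def by (intro sin_gt_zero) auto
        moreover have "G t x \<ge> 0" using G_mono[OF xi x1(1), of t] x x1(2) by simp
        ultimately show "0 \<le> G t x * sin x" by simp
      qed
    qed
    moreover have "\<rho> (t + u) * sin u > 0" using rp sup by simp
    ultimately show ?thesis by linarith
  next
    case 2
    have xn: "x11 < 0" using root_lt[OF zI1 x1(1) x1(2)] Gt0 2 by simp
    have un: "u < 0" using root_lt[OF pI2 u(1) u(2)] Gpi 2 by simp
    have sun: "sin u < 0" using un ub tq1 by (intro sin_neg) auto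
    have ux: "x11 < u"
    proof (rule ccontr)
      assume "\<not> x11 < u" then have "u \<le> x11" by simp
      from G_mono[OF uI1 x1(1) this, of t] x1(2) have "hfun q u \<le> Lp (t + u)" unfolding G_def by simp
      moreover have "hfun q (u + pi) < hfun q u"
        unfolding hfun_upi unfolding hfun_def using hcmp2[OF cu, of "Q * sin u"] sun Q1 by (simp add: mult_pos_neg)
      ultimately show False using Gu by simp
    qed
    have "\<rho> (t + x11) * sin x11 < \<rho> (t + u) * sin u"
    proof (rule P_inc[OF ux])
      show "{x11..u} \<subseteq> {lo 1<..<hi 1}" using uI1 x1(1) by auto
      show "\<forall>x\<in>{x11..u}. 0 \<le> G t x * sin x"
      proof
        fix x assume x: "x \<in> {x11..u}"
        then have xi: "x \<in> {lo 1<..<hi 1}" using uI1 x1(1) by auto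
        have "sin x < 0" using x un x1(1) tq1 unfolding lo_def by (intro sin_neg) auto
        moreover have "G t x \<le> 0" using G_mono[OF x1(1) xi, of t] x x1(2) by simp
        ultimately show "0 \<le> G t x * sin x" by (simp add: mult_nonpos_nonpos)
      qed
    qed
    moreover have "\<rho> (t + u) * sin u < 0" using rp sun by (simp add: mult_pos_neg)
    ultimately show ?thesis by linarith
  qed
  then show "\<rho> (t + x11) * sin x11 \<noteq> \<rho> (t + u) * sin u" "\<rho> (t + x11) * sin x11 \<noteq> 0" "\<rho> (t + u) * sin u \<noteq> 0" by auto
qed

lemma Tmap_full:
  assumes j: "j = 1 \<or> j = 2" and x0: "x0 \<in> {lo j<..<hi j}" and G0: "G (eta_angle l t) x0 = 0"
  shows "\<exists>m::int. Tmap q \<rho> j l t = eta_angle l t + x0 + 2 * pi * of_int m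
      \<and> Psi_fn q \<rho> t (Tmap q \<rho> j l t) (Tmap q \<rho> j l t + (if l = 2 then pi else 0)) \<noteq> 0
      \<and> detD2psi q \<rho> t (Tmap q \<rho> j l t) (Tmap q \<rho> j l t + (if l = 2 then pi else 0)) \<noteq> 0"
proof -
  obtain m where m: "Tmap q \<rho> j l t = eta_angle l t + x0 + 2 * pi * of_int m"
    using Tmap_char[OF j x0 G0] by blast
  have st: "Lp (Tmap q \<rho> j l t) = hfun q x0"
    using G0 unfolding m G_def Lp_per by simp
  from det_Psi_ne[OF m D_ne[OF x0] st] m show ?thesis by blast
qed

end

definition Wf :: "real \<Rightarrow> (real \<Rightarrow> real) \<Rightarrow> (real \<Rightarrow> complex) \<Rightarrow> real \<Rightarrow> real \<Rightarrow> nat \<Rightarrow> nat \<Rightarrow> complex" where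
  "Wf q \<rho> \<phi> t kn j l =
     (let T = Tmap q \<rho> j l t;
          txi = T + (if l = 2 then pi else 0)
      in complex_of_real (Psi_fn q \<rho> t T txi / sqrt \<bar>detD2psi q \<rho> t T txi\<bar>)
         * \<phi> txi
         * exp (\<i> * complex_of_real (pi * (-1) ^ l * (1 - (-1) ^ j) / 4
                                     + kn * psi_fn q \<rho> t T txi)))"

definition Ff :: "real \<Rightarrow> (real \<Rightarrow> real) \<Rightarrow> real \<Rightarrow> nat \<Rightarrow> nat \<Rightarrow> real" where
  "Ff q \<rho> t j l = \<rho> (Tmap q \<rho> j l t) * sin (Tmap q \<rho> j l t - t)"

lemma summand_split: "summand q \<rho> \<phi> t N kn j l = complex_of_real ((Ff q \<rho> t j l)^N) * Wf q \<rho> \<phi> t kn j l"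
  unfolding summand_def Wf_def Ff_def Let_def by (simp add: mult.assoc)

lemma Wf_norm: "norm (Wf q \<rho> \<phi> t kn j l) =
   \<bar>Psi_fn q \<rho> t (Tmap q \<rho> j l t) (Tmap q \<rho> j l t + (if l = 2 then pi else 0))
     / sqrt \<bar>detD2psi q \<rho> t (Tmap q \<rho> j l t) (Tmap q \<rho> j l t + (if l = 2 then pi else 0))\<bar>\<bar>
   * norm (\<phi> (Tmap q \<rho> j l t + (if l = 2 then pi else 0)))"
  unfolding Wf_def Let_def by (simp only: norm_mult norm_of_real norm_exp_i_times mult_1_right)

theorem corollary3:
  fixes q :: real and \<rho> :: "real \<Rightarrow> real" and \<phi> :: "real \<Rightarrow> complex"
    and k :: "nat \<Rightarrow> real" and t :: real
  assumes q: "q > 1"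
    and rho_pos: "\<forall>x. \<rho> x > 0"
    and rho_per: "\<forall>x. \<rho> (x + 2 * pi) = \<rho> x"
    and rho_C2: "\<forall>x. \<rho> differentiable (at x)" "\<forall>x. deriv \<rho> differentiable (at x)"
                "continuous_on UNIV (deriv (deriv \<rho>))"
    and rho_conv: "\<forall>x. deriv (deriv (\<lambda>s. ln (\<rho> s))) x < sqrt q / (1 + sqrt q)"
    and phi_cont: "continuous_on UNIV \<phi>"
    and phi_per: "\<forall>x. \<phi> (x + 2 * pi) = \<phi> x"
    and k_pos: "\<forall>n. k n > 0"
    and k_lim: "filterlim k at_top sequentially"
    and hyp: "\<forall>s. \<forall>N::nat.
               (\<lambda>n. \<Sum>j\<in>{1,2}. \<Sum>l\<in>{1,2}. summand q \<rho> \<phi> s N (k n) j l)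
               \<longlonglongrightarrow> 0"
    and eta: "deriv \<rho> (t + pi) = 0" "deriv \<rho> t \<noteq> 0"
  shows "\<phi> (Tmap q \<rho> 1 1 t) = 0 \<and> \<phi> (Tmap q \<rho> 2 2 t + pi) = 0
         \<and> (\<phi> t = 0 \<longleftrightarrow> \<phi> (t + pi) = 0)"
proof -
  interpret R: rs q \<rho>
    by unfold_locales (use q rho_pos rho_per rho_C2 rho_conv in auto)
  have ea1: "eta_angle 1 t = t" and ea2: "eta_angle 2 t = t + pi" unfolding eta_angle_def by simp_all
  have sinper: "\<forall>x. sin (x + 2 * pi) = sin x" by simp
  obtain x11 where x11: "x11 \<in> {R.lo 1<..<R.hi 1}" "R.G t x11 = 0" using R.G_exists[of 1 t] by auto
  obtain m11 where m11: "Tmap q \<rho> 1 1 t = t + x11 + 2 * pi * of_int m11"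
    and P11: "Psi_fn q \<rho> t (Tmap q \<rho> 1 1 t) (Tmap q \<rho> 1 1 t + (if (1::nat) = 2 then pi else 0)) \<noteq> 0"
    and D11: "detD2psi q \<rho> t (Tmap q \<rho> 1 1 t) (Tmap q \<rho> 1 1 t + (if (1::nat) = 2 then pi else 0)) \<noteq> 0"
    using R.Tmap_full[of 1 x11 1 t] x11 unfolding ea1 by auto
  obtain x22 where x22: "x22 \<in> {R.lo 2<..<R.hi 2}" "R.G (t + pi) x22 = 0" using R.G_exists[of 2 "t + pi"] by auto
  obtain m22 where m22: "Tmap q \<rho> 2 2 t = t + pi + x22 + 2 * pi * of_int m22"
    and P22: "Psi_fn q \<rho> t (Tmap q \<rho> 2 2 t) (Tmap q \<rho> 2 2 t + (if (2::nat) = 2 then pi else 0)) \<noteq> 0"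
    and D22: "detD2psi q \<rho> t (Tmap q \<rho> 2 2 t) (Tmap q \<rho> 2 2 t + (if (2::nat) = 2 then pi else 0)) \<noteq> 0"
    using R.Tmap_full[of 2 x22 2 t] x22 unfolding ea2 by auto
  have Lpt: "R.Lp (t + pi) = 0" unfolding R.L1_eq using eta(1) by simp
  have z1: "(0::real) \<in> {R.lo 1<..<R.hi 1}" using R.tq unfolding R.lo_def R.hi_def by auto
  have G12: "R.G (t + pi) 0 = 0" unfolding R.G_def using Lpt R.hfun0 by simp
  obtain m12 where m12: "Tmap q \<rho> 1 2 t = t + pi + 0 + 2 * pi * of_int m12"
    and P12: "Psi_fn q \<rho> t (Tmap q \<rho> 1 2 t) (Tmap q \<rho> 1 2 t + (if (2::nat) = 2 then pi else 0)) \<noteq> 0"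
    and D12: "detD2psi q \<rho> t (Tmap q \<rho> 1 2 t) (Tmap q \<rho> 1 2 t + (if (2::nat) = 2 then pi else 0)) \<noteq> 0"
    using R.Tmap_full[of 1 0 2 t] z1 G12 unfolding ea2 by auto
  have p2: "pi \<in> {R.lo 2<..<R.hi 2}" using R.tq unfolding R.lo_def R.hi_def by auto
  have G21: "R.G t pi = 0" unfolding R.G_def using Lpt R.hfunpi by simp
  obtain m21 where m21: "Tmap q \<rho> 2 1 t = t + pi + 2 * pi * of_int m21"
    and P21: "Psi_fn q \<rho> t (Tmap q \<rho> 2 1 t) (Tmap q \<rho> 2 1 t + (if (1::nat) = 2 then pi else 0)) \<noteq> 0"
    and D21: "detD2psi q \<rho> t (Tmap q \<rho> 2 1 t) (Tmap q \<rho> 2 1 t + (if (1::nat) = 2 then pi else 0)) \<noteq> 0"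
    using R.Tmap_full[of 2 pi 1 t] p2 G21 unfolding ea1 by auto
  define u where "u = x22 - pi"
  have F11: "Ff q \<rho> t 1 1 = \<rho> (t + x11) * sin x11"
  proof -
    have "\<rho> (t + x11 + 2 * pi * of_int m11) = \<rho> (t + x11)" by (rule R.rho_per_int)
    moreover have "sin (x11 + 2 * pi * of_int m11) = sin x11" by (rule per_int[OF sinper])
    ultimately show ?thesis unfolding Ff_def m11 by (simp add: add.assoc)
  qed
  have F22: "Ff q \<rho> t 2 2 = \<rho> (t + u) * sin u"
  proof -
    have e: "t + pi + x22 + 2 * pi * of_int m22 = (t + u) + 2 * pi * of_int (m22 + 1)"
      unfolding u_def by (simp add: algebra_simps)
    have e2: "t + pi + x22 + 2 * pi * of_int m22 - t = u + 2 * pi * of_int (m22 + 1)"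
      unfolding u_def by (simp add: algebra_simps)
    have "\<rho> ((t + u) + 2 * pi * of_int (m22 + 1)) = \<rho> (t + u)" by (rule R.rho_per_int)
    moreover have "sin (u + 2 * pi * of_int (m22 + 1)) = sin u" by (rule per_int[OF sinper])
    ultimately show ?thesis unfolding Ff_def m22 e2 unfolding e by simp
  qed
  have F12: "Ff q \<rho> t 1 2 = 0"
  proof -
    have "sin (pi + 2 * pi * of_int m12) = sin pi" by (rule per_int[OF sinper])
    then show ?thesis unfolding Ff_def m12 by (simp add: add.assoc)
  qed
  have F21: "Ff q \<rho> t 2 1 = 0"
  proof -
    have "sin (pi + 2 * pi * of_int m21) = sin pi" by (rule per_int[OF sinper])
    then show ?thesis unfolding Ff_def m21 by (simp add: add.assoc)
  qed
  have uI: "u + pi \<in> {R.lo 2<..<R.hi 2}" using x22 unfolding u_def by simp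
  have Gu: "R.G (t - pi) (u + pi) = 0"
  proof -
    have "R.Lp ((t - pi + x22) + 2 * pi * of_int (1::int)) = R.Lp (t - pi + x22)" by (rule R.Lp_per)
    then have "R.Lp (t + pi + x22) = R.Lp (t - pi + x22)" by (simp add: algebra_simps)
    then show ?thesis using x22(2) unfolding R.G_def u_def by simp
  qed
  have nz: "R.Lp t \<noteq> 0" unfolding R.L1_eq using eta(2) rho_pos[rule_format, of t] by simp
  note sp = R.sep[OF x11 uI Gu nz]
  define a where "a = Ff q \<rho> t 1 1"
  define b where "b = Ff q \<rho> t 2 2"
  have ab: "a \<noteq> 0" "b \<noteq> 0" "a \<noteq> b" unfolding a_def b_def F11 F22 using sp by auto
  define w where "w = (\<lambda>j l n. Wf q \<rho> \<phi> t (k n) j l)"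
  define S where "S = (\<lambda>N n. \<Sum>j\<in>{1::nat,2}. \<Sum>l\<in>{1::nat,2}. summand q \<rho> \<phi> t N (k n) j l)"
  have Sexp: "S N n = of_real (a^N) * w 1 1 n + of_real ((Ff q \<rho> t 1 2)^N) * w 1 2 n
      + of_real ((Ff q \<rho> t 2 1)^N) * w 2 1 n + of_real (b^N) * w 2 2 n" for N n
    unfolding S_def w_def a_def b_def by (simp add: summand_split add.assoc)
  have lim: "S N \<longlonglongrightarrow> 0" for N using hyp unfolding S_def by blast
  have V: "w 1 1 \<longlonglongrightarrow> 0" "w 2 2 \<longlonglongrightarrow> 0" "(\<lambda>n. w 1 2 n + w 2 1 n) \<longlonglongrightarrow> 0"
  proof -
    note vv = vand[OF ab, of "S 0" "w 1 1" "w 1 2" "w 2 1" "w 2 2" "S 1" "S 2"]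
    have e0: "S 0 n = w 1 1 n + w 1 2 n + w 2 1 n + w 2 2 n" for n using Sexp[of 0 n] by simp
    have e1: "S 1 n = of_real a * w 1 1 n + of_real b * w 2 2 n" for n using Sexp[of 1 n] F12 F21 by simp
    have e2: "S 2 n = of_real (a^2) * w 1 1 n + of_real (b^2) * w 2 2 n" for n using Sexp[of 2 n] F12 F21 by simp
    from vv[OF e0 e1 e2 lim lim lim]
    show "w 1 1 \<longlonglongrightarrow> 0" "w 2 2 \<longlonglongrightarrow> 0" "(\<lambda>n. w 1 2 n + w 2 1 n) \<longlonglongrightarrow> 0" by auto
  qed
  have nrm: "norm (w j l n) = \<bar>Psi_fn q \<rho> t (Tmap q \<rho> j l t) (Tmap q \<rho> j l t + (if l = 2 then pi else 0))
     / sqrt \<bar>detD2psi q \<rho> t (Tmap q \<rho> j l t) (Tmap q \<rho> j l t + (if l = 2 then pi else 0))\<bar>\<bar>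
   * norm (\<phi> (Tmap q \<rho> j l t + (if l = 2 then pi else 0)))" for j l n
    unfolding w_def by (rule Wf_norm)
  have r1: "\<phi> (Tmap q \<rho> 1 1 t) = 0"
  proof -
    have "\<bar>Psi_fn q \<rho> t (Tmap q \<rho> 1 1 t) (Tmap q \<rho> 1 1 t + (if (1::nat) = 2 then pi else 0))
     / sqrt \<bar>detD2psi q \<rho> t (Tmap q \<rho> 1 1 t) (Tmap q \<rho> 1 1 t + (if (1::nat) = 2 then pi else 0))\<bar>\<bar>
     * norm (\<phi> (Tmap q \<rho> 1 1 t + (if (1::nat) = 2 then pi else 0))) = 0"
      by (rule const_norm_zero[OF V(1) nrm])
    then show ?thesis using P11 D11 by simp
  qed
  have r2: "\<phi> (Tmap q \<rho> 2 2 t + pi) = 0"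
  proof -
    have "\<bar>Psi_fn q \<rho> t (Tmap q \<rho> 2 2 t) (Tmap q \<rho> 2 2 t + (if (2::nat) = 2 then pi else 0))
     / sqrt \<bar>detD2psi q \<rho> t (Tmap q \<rho> 2 2 t) (Tmap q \<rho> 2 2 t + (if (2::nat) = 2 then pi else 0))\<bar>\<bar>
     * norm (\<phi> (Tmap q \<rho> 2 2 t + (if (2::nat) = 2 then pi else 0))) = 0"
      by (rule const_norm_zero[OF V(2) nrm])
    then show ?thesis using P22 D22 by simp
  qed
  have r3: "\<phi> t = 0 \<longleftrightarrow> \<phi> (t + pi) = 0"
  proof -
    have eqC: "\<bar>Psi_fn q \<rho> t (Tmap q \<rho> 1 2 t) (Tmap q \<rho> 1 2 t + (if (2::nat) = 2 then pi else 0))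
     / sqrt \<bar>detD2psi q \<rho> t (Tmap q \<rho> 1 2 t) (Tmap q \<rho> 1 2 t + (if (2::nat) = 2 then pi else 0))\<bar>\<bar>
     * norm (\<phi> (Tmap q \<rho> 1 2 t + (if (2::nat) = 2 then pi else 0)))
     = \<bar>Psi_fn q \<rho> t (Tmap q \<rho> 2 1 t) (Tmap q \<rho> 2 1 t + (if (1::nat) = 2 then pi else 0))
     / sqrt \<bar>detD2psi q \<rho> t (Tmap q \<rho> 2 1 t) (Tmap q \<rho> 2 1 t + (if (1::nat) = 2 then pi else 0))\<bar>\<bar>
     * norm (\<phi> (Tmap q \<rho> 2 1 t + (if (1::nat) = 2 then pi else 0)))"
      by (rule pair_norm_eq[OF V(3) nrm nrm])
    have ph1: "\<phi> (Tmap q \<rho> 1 2 t + pi) = \<phi> t"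
    proof -
      have "Tmap q \<rho> 1 2 t + pi = t + 2 * pi * of_int (m12 + 1)" unfolding m12 by (simp add: algebra_simps)
      then show ?thesis using per_int[OF phi_per, of t "m12 + 1"] by (simp only:)
    qed
    have ph2: "\<phi> (Tmap q \<rho> 2 1 t) = \<phi> (t + pi)"
      unfolding m21 by (rule per_int[OF phi_per])
    have c1: "Psi_fn q \<rho> t (Tmap q \<rho> 1 2 t) (Tmap q \<rho> 1 2 t + (if (2::nat) = 2 then pi else 0))
     / sqrt \<bar>detD2psi q \<rho> t (Tmap q \<rho> 1 2 t) (Tmap q \<rho> 1 2 t + (if (2::nat) = 2 then pi else 0))\<bar> \<noteq> 0"
      using P12 D12 by simp
    have c2: "Psi_fn q \<rho> t (Tmap q \<rho> 2 1 t) (Tmap q \<rho> 2 1 t + (if (1::nat) = 2 then pi else 0))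
     / sqrt \<bar>detD2psi q \<rho> t (Tmap q \<rho> 2 1 t) (Tmap q \<rho> 2 1 t + (if (1::nat) = 2 then pi else 0))\<bar> \<noteq> 0"
      using P21 D21 by simp
    have "\<phi> (Tmap q \<rho> 1 2 t + (if (2::nat) = 2 then pi else 0)) = 0 \<longleftrightarrow> \<phi> (Tmap q \<rho> 2 1 t + (if (1::nat) = 2 then pi else 0)) = 0"
      by (rule zero_iff[OF c1 c2 eqC])
    then show ?thesis using ph1 ph2 by simp
  qed
  show ?thesis using r1 r2 r3 by blast
qed

end
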